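(* Let $n\ge27$, $\mathcal{X},\mathcal{Y}$ finite with $|\mathcal{X}|,|\mathcal{Y}|\ge2$, let $M$ be a discrete random variable, $\mathbf{X}$ a random vector on $\mathcal{X}^n$, and $(\mathbf{Y}_w)_{w\in\mathcal{P}(\mathcal{Y}|\mathcal{X})}$ random vectors on $\mathcal{Y}^n$ such that $M,\mathbf{X},(\mathbf{Y}_w)_w$ form a Markov chain in that order and $\mathbf{Y}_w|\mathbf{X}\sim w^n$. Let $\delta,\alpha>0$ and $\epsilon>\frac{2|\mathcal{X}||\mathcal{Y}|}{n}\log_2 n$. If for some $\tilde w\in\mathcal{P}(\mathcal{Y}|\mathcal{X})$ $$\Pr\left(|h(\mathbf{Y}_{\tilde w}|M)-\mathbb{H}(\mathbf{Y}_{\tilde w}|M)|>n\delta\right)<2^{-n\alpha},$$ then $$\Pr\left(|h(\mathbf{Y}_w|M)-\mathbb{H}(\mathbf{Y}_w|M)|>n\tilde\delta\right)<2^{-n\epsilon}+2^{-n(\alpha-\epsilon)},$$ where $$\tilde\delta=(2+2^{-n\epsilon}+2^{-n(\alpha-\epsilon)})(\delta+\epsilon)+(2^{-n\epsilon}+2^{-n(\alpha-\epsilon)})\left[\log_2|\mathcal{Y}|-\frac2n\log_2(2^{-n\epsilon}+2^{-n(\alpha-\epsilon)})\right],$$ for all $w\in\mathcal{P}(\mathcal{Y}|\mathcal{X})$ such that $$\sup_{\hat p\in\mathcal{P}(\mathcal{X}),\ \hat w\in\mathcal{P}(\mathcal{Y}|\mathcal{X})}\mathbb{D}_{\hat w}(w\|\tilde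 w|\hat p)\le\epsilon-\frac{2|\mathcal{X}||\mathcal{Y}|}{n}\log_2 n.$$
   Context: $\mathcal{P}(\mathcal{Y}|\mathcal{X})$ is the set of conditional distributions from $\mathcal{X}$ to $\mathcal{Y}$, $\mathcal{P}(\mathcal{X})$ the set of distributions on $\mathcal{X}$, $w^n(\mathbf{y}|\mathbf{x})=\prod_t w(y_t|x_t)$. $h(\mathbf{Y}_w|M)=-\log_2 p_{\mathbf{Y}_w|M}(\mathbf{Y}_w|M)$ and $\mathbb{H}$ denotes conditional entropy. $\mathbb{D}_{\hat w}(w\|\tilde w|\hat p)=\sum_{y,x}\hat w(y|x)\hat p(x)\log_2\frac{w(y|x)}{\tilde w(y|x)}$. *)

theory Defs
  imports "HOL-Probability.Probability"
begin

primrec chan_n :: "('x \<Rightarrow> 'y pmf) \<Rightarrow> 'x list \<Rightarrow> 'y list pmf" where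
  "chan_n w [] = return_pmf []"
| "chan_n w (x # xs) = bind_pmf (w x) (\<lambda>y. map_pmf (\<lambda>ys. y # ys) (chan_n w xs))"

(* joint law of (M, Y_w) when M - X - Y_w is a Markov chain and Y_w | X ~ w^n;
   PMX is the joint law of (M, X) *)
definition joint_MY :: "('m \<times> 'x list) pmf \<Rightarrow> ('x \<Rightarrow> 'y pmf) \<Rightarrow> ('m \<times> 'y list) pmf" where
  "joint_MY PMX w = bind_pmf PMX (\<lambda>(m, x). map_pmf (\<lambda>y. (m, y)) (chan_n w x))"

definition info_density :: "('m \<times> 'y) pmf \<Rightarrow> 'm \<times> 'y \<Rightarrow> real" where
  "info_density J z = - log 2 (pmf J z / pmf (map_pmf fst J) (fst z))"

definition cond_entropy :: "('m \<times> 'y) pmf \<Rightarrow> real" where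
  "cond_entropy J = measure_pmf.expectation J (info_density J)"

definition dev_prob :: "('m \<times> 'y) pmf \<Rightarrow> real \<Rightarrow> real" where
  "dev_prob J t = measure_pmf.prob J {z. \<bar>info_density J z - cond_entropy J\<bar> > t}"

definition log_ratio :: "real \<Rightarrow> real \<Rightarrow> ereal" where
  "log_ratio a b = (if a > 0 \<and> b > 0 then ereal (log 2 (a / b))
                    else if a > 0 then \<infinity> else if b > 0 then - \<infinity> else 0)"

definition cond_div :: "('x::finite \<Rightarrow> 'y::finite pmf) \<Rightarrow> ('x \<Rightarrow> 'y pmf) \<Rightarrow> ('x \<Rightarrow> 'y pmf) \<Rightarrow> 'x pmf \<Rightarrow> ereal" where
  "cond_div wh w wt ph = (\<Sum>y\<in>UNIV. \<Sum>x\<in>UNIV.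
      (if pmf (wh x) y * pmf ph x = 0 then 0
       else ereal (pmf (wh x) y * pmf ph x) * log_ratio (pmf (w x) y) (pmf (wt x) y)))"

end

theory Submission
  imports Defs "HOL-Analysis.Harmonic_Numbers"
begin


lemma chan_set: "ys \<in> set_pmf (chan_n w xs) \<Longrightarrow> length ys = length xs"
  by (induction xs arbitrary: ys) auto

lemma pmf_map_Cons: "pmf (map_pmf (\<lambda>ys. y' # ys) C) zs =
   (case zs of [] \<Rightarrow> 0 | y # ys \<Rightarrow> (if y' = y then pmf C ys else 0))"
proof (cases zs)
  case Nil then show ?thesis by (auto intro!: pmf_map_outside)
next
  case (Cons y ys)
  show ?thesis
  proof (cases "y' = y")
    case True
    have "inj (\<lambda>ys. y' # ys)" by (auto simp: inj_def)
    then show ?thesis using Cons True pmf_map_inj'[of "\<lambda>ys. y' # ys" C ys] by simp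
  next
    case False then show ?thesis using Cons by (auto intro!: pmf_map_outside)
  qed
qed

lemma pmf_chan_Nil: "pmf (chan_n w (x # xs)) [] = 0"
  by (simp add: pmf_bind pmf_map_Cons)

lemma pmf_chan_Cons: "pmf (chan_n w (x # xs)) (y # ys) = pmf (w x) y * pmf (chan_n w xs) ys"
proof -
  have e: "(\<lambda>y'. pmf (map_pmf ((#) y') (chan_n w xs)) (y#ys)) = (\<lambda>y'. indicator {y} y' * pmf (chan_n w xs) ys)"
    by (auto simp: pmf_map_Cons fun_eq_iff)
  have "pmf (chan_n w (x # xs)) (y # ys) = (\<integral>y'. indicator {y} y' * pmf (chan_n w xs) ys \<partial>measure_pmf (w x))"
    by (simp only: chan_n.simps pmf_bind e)
  also have "\<dots> = measure (w x) {y} * pmf (chan_n w xs) ys"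
    by (subst Bochner_Integration.integral_mult_left_zero) (simp add: measure_pmf.emeasure_eq_measure)
  also have "\<dots> = pmf (w x) y * pmf (chan_n w xs) ys"
    by (simp add: measure_pmf_single)
  finally show ?thesis .
qed

lemma chan_le:
  assumes "\<And>x y. pmf (w x) y \<le> K * pmf (wt x) y" "K \<ge> 0"
  shows "pmf (chan_n w xs) ys \<le> K ^ length xs * pmf (chan_n wt xs) ys"
proof (induction xs arbitrary: ys)
  case Nil then show ?case by (simp add: indicator_def)
next
  case (Cons x xs)
  show ?case
  proof (cases ys)
    case Nil then show ?thesis by (simp del: chan_n.simps add: pmf_chan_Nil)
  next
    case (Cons y ys')
    have "pmf (w x) y * pmf (chan_n w xs) ys' \<le> (K * pmf (wt x) y) * (K ^ length xs * pmf (chan_n wt xs) ys')"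
      by (rule mult_mono) (use assms Cons.IH in auto)
    then show ?thesis using Cons by (simp del: chan_n.simps add: pmf_chan_Cons algebra_simps)
  qed
qed

lemma pmf_map_Pair: "pmf (map_pmf (Pair m') C) (m, y) = (if m' = m then pmf C y else 0)"
proof (cases "m' = m")
  case True
  have "inj (Pair m')" by (auto simp: inj_def)
  then show ?thesis using True pmf_map_inj'[of "Pair m'" C y] by simp
next
  case False then show ?thesis by (auto intro!: pmf_map_outside)
qed

lemma pmf_joint: "pmf (joint_MY PMX w) (m, y) =
   (\<integral>mx. (if fst mx = m then pmf (chan_n w (snd mx)) y else 0) \<partial>measure_pmf PMX)"
  unfolding joint_MY_def pmf_bind
  by (rule Bochner_Integration.integral_cong) (auto simp: pmf_map_Pair split: prod.splits)

lemma marg_joint: "map_pmf fst (joint_MY PMX w) = map_pmf fst PMX"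
  unfolding joint_MY_def map_bind_pmf
  by (simp add: case_prod_unfold pmf.map_comp o_def map_pmf_def[of fst PMX])

lemma joint_set: "z \<in> set_pmf (joint_MY PMX w) \<Longrightarrow> \<exists>x. (fst z, x) \<in> set_pmf PMX \<and> length (snd z) = length x"
  unfolding joint_MY_def by (force dest: chan_set)

lemma integrable_pmf_bounded:
  fixes f :: "'a \<Rightarrow> real"
  assumes "\<And>x. \<bar>f x\<bar> \<le> B"
  shows "integrable (measure_pmf p) f"
  by (rule measure_pmf.integrable_const_bound[where B=B]) (use assms in auto)

lemma joint_le:
  assumes len: "\<forall>mx\<in>set_pmf PMX. length (snd mx) = n"
    and wb: "\<And>x y. pmf (w x) y \<le> K * pmf (wt x) y" and K: "K \<ge> 0"
  shows "pmf (joint_MY PMX w) z \<le> K^n * pmf (joint_MY PMX wt) z"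
proof -
  obtain m y where z: "z = (m, y)" by (cases z)
  let ?f = "\<lambda>w mx. (if fst mx = m then pmf (chan_n w (snd mx)) y else 0)"
  have "pmf (joint_MY PMX w) z = (\<integral>mx. ?f w mx \<partial>measure_pmf PMX)" by (simp add: z pmf_joint)
  also have "\<dots> \<le> (\<integral>mx. K^n * ?f wt mx \<partial>measure_pmf PMX)"
  proof (rule integral_mono_AE)
    show "integrable (measure_pmf PMX) (?f w)"
      by (rule integrable_pmf_bounded[where B=1]) (auto simp: pmf_le_1)
    show "integrable (measure_pmf PMX) (\<lambda>mx. K^n * ?f wt mx)"
      by (rule integrable_pmf_bounded[where B="K^n"]) (auto simp: pmf_le_1 abs_mult K intro: mult_left_le)
    show "AE mx in measure_pmf PMX. ?f w mx \<le> K^n * ?f wt mx"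
      unfolding AE_measure_pmf_iff
    proof (intro ballI)
      fix mx assume "mx \<in> set_pmf PMX"
      then have "length (snd mx) = n" using len by auto
      then show "?f w mx \<le> K^n * ?f wt mx" using chan_le[where xs="snd mx" and ys=y, OF wb K] by auto
    qed
  qed
  also have "\<dots> = K^n * pmf (joint_MY PMX wt) z" by (simp add: z pmf_joint)
  finally show ?thesis .
qed

lemma prob_le:
  assumes "\<And>z. z \<in> E \<Longrightarrow> pmf Q z \<le> c * pmf P z" "c \<ge> 0"
  shows "measure Q E \<le> c * measure P E"
proof -
  have "emeasure (measure_pmf Q) E = (\<integral>\<^sup>+ z. pmf Q z \<partial>count_space E)" by (simp add: nn_integral_pmf)
  also have "\<dots> \<le> (\<integral>\<^sup>+ z. ennreal c * pmf P z \<partial>count_space E)"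
    by (rule nn_integral_mono) (use assms in \<open>auto simp: ennreal_mult[symmetric]\<close>)
  also have "\<dots> = ennreal c * emeasure (measure_pmf P) E"
    by (simp add: nn_integral_cmult nn_integral_pmf)
  finally have "ennreal (measure Q E) \<le> ennreal (c * measure P E)"
    by (simp add: measure_pmf.emeasure_eq_measure ennreal_mult assms(2))
  then show ?thesis using assms(2) by (simp add: ennreal_le_iff)
qed



lemma pmf_le_marg: "pmf J z \<le> pmf (map_pmf fst J) (fst z)"
proof -
  have "pmf J z = measure J {z}" by (simp add: measure_pmf_single)
  also have "\<dots> \<le> measure J (fst -` {fst z})" by (rule measure_pmf.finite_measure_mono) auto
  also have "\<dots> = pmf (map_pmf fst J) (fst z)" by (simp add: pmf_map)
  finally show ?thesis .
qed

lemma ptwise: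
  fixes J :: "('m \<times> 'y) pmf"
  assumes z: "z \<in> set_pmf J" and t: "t > 0"
  shows "0 \<le> info_density J z"
    and "info_density J z \<le> (t * (pmf (map_pmf fst J) (fst z) / pmf J z) - 1) / ln 2 - log 2 t"
proof -
  let ?a = "pmf J z" and ?b = "pmf (map_pmf fst J) (fst z)"
  have a: "?a > 0" using z by (simp add: pmf_positive)
  have ab: "?a \<le> ?b" by (rule pmf_le_marg)
  then have b: "?b > 0" using a by linarith
  have g1: "?b / ?a \<ge> 1" using a ab by simp
  have h: "info_density J z = log 2 (?b / ?a)"
    unfolding info_density_def using a b by (simp add: log_divide)
  show "0 \<le> info_density J z" unfolding h using g1 by simp
  have "log 2 (?b / ?a) = log 2 (t * (?b / ?a)) - log 2 t"
    by (subst log_mult) (use a b t in auto)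
  also have "log 2 (t * (?b / ?a)) = ln (t * (?b / ?a)) / ln 2" by (simp add: log_def)
  also have "\<dots> \<le> (t * (?b / ?a) - 1) / ln 2"
    by (rule divide_right_mono) (use a b t in \<open>auto intro!: ln_le_minus_one\<close>)
  finally show "info_density J z \<le> (t * (?b / ?a) - 1) / ln 2 - log 2 t" unfolding h by simp
qed

lemma pmf_map_Pair2: "pmf (map_pmf (\<lambda>m. (m, y')) C) (m, y) = (if y' = y then pmf C m else 0)"
proof (cases "y' = y")
  case True
  have "inj (\<lambda>m. (m, y'))" by (auto simp: inj_def)
  then show ?thesis using True pmf_map_inj'[of "\<lambda>m. (m, y')" C m] by simp
next
  case False then show ?thesis by (auto intro!: pmf_map_outside)
qed

lemma g_nn:
  fixes J :: "('m \<times> 'y::finite list) pmf"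
  assumes len: "\<forall>z\<in>set_pmf J. length (snd z) = n"
  shows "(\<integral>\<^sup>+z. ennreal (pmf (map_pmf fst J) (fst z) / pmf J z) \<partial>measure_pmf J) \<le> ennreal (real (CARD('y) ^ n))"
proof -
  let ?\<mu> = "map_pmf fst J"
  define Yn where "Yn = {ys :: 'y list. set ys \<subseteq> UNIV \<and> length ys = n}"
  have fin: "finite Yn" unfolding Yn_def by (rule finite_lists_length_eq) simp
  have card: "card Yn = CARD('y) ^ n" unfolding Yn_def by (rule card_lists_length_eq) simp
  have "(\<integral>\<^sup>+z. ennreal (pmf ?\<mu> (fst z) / pmf J z) \<partial>measure_pmf J)
      = (\<integral>\<^sup>+z. ennreal (pmf J z) * ennreal (pmf ?\<mu> (fst z) / pmf J z) \<partial>count_space UNIV)"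
    by (rule nn_integral_measure_pmf)
  also have "\<dots> \<le> (\<integral>\<^sup>+z. (\<Sum>y\<in>Yn. ennreal (pmf (map_pmf (\<lambda>m. (m, y)) ?\<mu>) z)) \<partial>count_space UNIV)"
  proof (rule nn_integral_mono)
    fix z :: "'m \<times> 'y list"
    obtain m ys where zz: "z = (m, ys)" by (cases z)
    show "ennreal (pmf J z) * ennreal (pmf ?\<mu> (fst z) / pmf J z) \<le> (\<Sum>y\<in>Yn. ennreal (pmf (map_pmf (\<lambda>m. (m, y)) ?\<mu>) z))"
    proof (cases "z \<in> set_pmf J")
      case True
      then have a: "pmf J z > 0" by (simp add: pmf_positive)
      have "ys \<in> Yn" using True len zz by (auto simp: Yn_def)
      then have s: "(\<Sum>y\<in>Yn. ennreal (pmf (map_pmf (\<lambda>m. (m, y)) ?\<mu>) z)) = ennreal (pmf ?\<mu> m)"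
        using fin by (simp add: zz pmf_map_Pair2 if_distrib sum.delta cong: if_cong)
      show ?thesis unfolding s using a by (simp add: zz ennreal_mult[symmetric])
    next
      case False
      then show ?thesis by (simp add: set_pmf_eq)
    qed
  qed
  also have "\<dots> = (\<Sum>y\<in>Yn. \<integral>\<^sup>+z. ennreal (pmf (map_pmf (\<lambda>m. (m, y)) ?\<mu>) z) \<partial>count_space UNIV)"
    by (rule nn_integral_sum) simp
  also have "\<dots> = (\<Sum>y\<in>Yn. 1)" by (simp add: nn_integral_pmf)
  also have "\<dots> = of_nat (card Yn)" by simp
  also have "\<dots> = ennreal (real (CARD('y) ^ n))" by (metis card ennreal_of_nat_eq_real_of_nat)
  finally show ?thesis .
qed

lemma ls:
  fixes J :: "('m \<times> 'y::finite list) pmf"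
  assumes len: "\<forall>z\<in>set_pmf J. length (snd z) = n"
  shows "integrable J (info_density J)"
    and "AE z in J. 0 \<le> info_density J z"
    and "\<And>t. t > 0 \<Longrightarrow> (\<integral>z. info_density J z * indicator B z \<partial>J)
          \<le> (t * real (CARD('y) ^ n) - measure J B) / ln 2 - measure J B * log 2 t"
proof -
  define g where "g = (\<lambda>z. pmf (map_pmf fst J) (fst z) / pmf J z)"
  define N where "N = real (CARD('y) ^ n)"
  have gnn: "\<And>z. 0 \<le> g z" unfolding g_def by simp
  have gn: "(\<integral>\<^sup>+z. ennreal (g z) \<partial>J) \<le> ennreal N"
    unfolding g_def N_def by (rule g_nn[OF len])
  have gi: "integrable J g"
  proof (rule integrableI_nonneg)
    show "g \<in> borel_measurable (measure_pmf J)" by simp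
    show "AE x in measure_pmf J. 0 \<le> g x" using gnn by simp
    show "(\<integral>\<^sup>+x. ennreal (g x) \<partial>J) < \<infinity>" using gn
      using le_less_trans[OF gn ennreal_less_top[of N]] by simp
  qed
  have gint: "(\<integral>z. g z \<partial>J) \<le> N"
  proof -
    have "(\<integral>z. g z \<partial>J) = enn2real (\<integral>\<^sup>+z. ennreal (g z) \<partial>J)"
      by (rule integral_eq_nn_integral) (use gnn in auto)
    also have "\<dots> \<le> enn2real (ennreal N)"
      by (rule enn2real_mono[OF gn]) simp
    also have "\<dots> \<le> N" by (simp add: N_def)
    finally show ?thesis .
  qed
  have pw: "\<And>z t. z \<in> set_pmf J \<Longrightarrow> t > 0 \<Longrightarrow> info_density J z \<le> (t * g z - 1) / ln 2 - log 2 t"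
    unfolding g_def by (rule ptwise(2))
  show hnn: "AE z in J. 0 \<le> info_density J z"
    by (simp add: AE_measure_pmf_iff ptwise(1)[of _ _ 1])
  show hi: "integrable J (info_density J)"
  proof (rule Bochner_Integration.integrable_bound)
    show "integrable J (\<lambda>z. g z / ln 2)" using gi by simp
    show "info_density J \<in> borel_measurable (measure_pmf J)" by simp
    show "AE x in measure_pmf J. norm (info_density J x) \<le> norm (g x / ln 2)"
      unfolding AE_measure_pmf_iff
    proof (intro ballI)
      fix z assume z: "z \<in> set_pmf J"
      have "info_density J z \<le> (1 * g z - 1) / ln 2 - log 2 1" by (rule pw[OF z]) simp
      also have "\<dots> \<le> g z / ln 2" by (simp add: divide_right_mono)
      finally show "norm (info_density J z) \<le> norm (g z / ln 2)"
        using ptwise(1)[OF z, of 1] gnn[of z] by simp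
    qed
  qed
  fix t :: real assume t: "t > 0"
  let ?q = "measure J B"
  have "(\<integral>z. info_density J z * indicator B z \<partial>J)
      \<le> (\<integral>z. t / ln 2 * (g z * indicator B z) - (1 / ln 2 + log 2 t) * indicator B z \<partial>J)"
  proof (rule integral_mono_AE)
    show "integrable J (\<lambda>z. info_density J z * indicator B z)"
      by (rule integrable_real_mult_indicator) (use hi in auto)
    have "integrable J (\<lambda>z. g z * indicator B z)"
      by (rule integrable_real_mult_indicator) (use gi in auto)
    moreover have "integrable J (indicat_real B)"
      by (rule integrable_pmf_bounded[where B=1]) (simp add: indicator_def)
    ultimately show "integrable J (\<lambda>z. t / ln 2 * (g z * indicator B z) - (1 / ln 2 + log 2 t) * indicator B z)"
      by (intro Bochner_Integration.integrable_diff) auto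
    show "AE z in J. info_density J z * indicator B z \<le> t / ln 2 * (g z * indicator B z) - (1 / ln 2 + log 2 t) * indicator B z"
      unfolding AE_measure_pmf_iff
    proof (intro ballI)
      fix z assume z: "z \<in> set_pmf J"
      show "info_density J z * indicator B z \<le> t / ln 2 * (g z * indicator B z) - (1 / ln 2 + log 2 t) * indicator B z"
        using pw[OF z t] by (auto simp: indicator_def diff_divide_distrib)
    qed
  qed
  also have "\<dots> = t / ln 2 * (\<integral>z. g z * indicator B z \<partial>J) - (1 / ln 2 + log 2 t) * ?q"
  proof -
    have "integrable J (\<lambda>z. g z * indicator B z)"
      by (rule integrable_real_mult_indicator) (use gi in auto)
    moreover have "integrable J (indicat_real B)"
      by (rule integrable_pmf_bounded[where B=1]) (simp add: indicator_def)
    ultimately show ?thesis by (simp add: Bochner_Integration.integral_diff)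
  qed
  also have "\<dots> \<le> t / ln 2 * N - (1 / ln 2 + log 2 t) * ?q"
  proof -
    have "(\<integral>z. g z * indicator B z \<partial>J) \<le> (\<integral>z. g z \<partial>J)"
    proof (rule integral_mono)
      show "integrable J (\<lambda>z. g z * indicator B z)"
        by (rule integrable_real_mult_indicator) (use gi in auto)
    qed (use gi gnn in \<open>auto simp: indicator_def\<close>)
    then have "(\<integral>z. g z * indicator B z \<partial>J) \<le> N" using gint by linarith
    then have "t * (\<integral>z. g z * indicator B z \<partial>J) \<le> t * N" using t by (simp add: mult_left_mono)
    then have "t * (\<integral>z. g z * indicator B z \<partial>J) / ln 2 \<le> t * N / ln 2" by (simp add: divide_right_mono)
    then show ?thesis by simp
  qed
  also have "\<dots> = (t * N - ?q) / ln 2 - ?q * log 2 t" by (simp add: field_simps)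
  finally show "(\<integral>z. info_density J z * indicator B z \<partial>J)
          \<le> (t * real (CARD('y) ^ n) - measure J B) / ln 2 - measure J B * log 2 t"
    unfolding N_def .
qed



lemma wbound:
  fixes w wt :: "'x::finite \<Rightarrow> 'y::finite pmf"
  assumes "(SUP ph \<in> (UNIV :: 'x pmf set). SUP wh \<in> (UNIV :: ('x \<Rightarrow> 'y pmf) set). cond_div wh w wt ph) \<le> ereal r"
  shows "pmf (w x) y \<le> 2 powr r * pmf (wt x) y"
proof -
  let ?LR = "log_ratio (pmf (w x) y) (pmf (wt x) y)"
  have "cond_div (\<lambda>_. return_pmf y) w wt (return_pmf x) \<le> (SUP wh \<in> (UNIV :: ('x \<Rightarrow> 'y pmf) set). cond_div wh w wt (return_pmf x))"
    by (rule SUP_upper) simp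
  also have "\<dots> \<le> (SUP ph \<in> (UNIV :: 'x pmf set). SUP wh \<in> (UNIV :: ('x \<Rightarrow> 'y pmf) set). cond_div wh w wt ph)"
    by (rule SUP_upper) simp
  also have "\<dots> \<le> ereal r" by (rule assms)
  finally have le: "cond_div (\<lambda>_. return_pmf y) w wt (return_pmf x) \<le> ereal r" .
  have pt: "\<And>y' x'. (if pmf (return_pmf y) y' * pmf (return_pmf x) x' = 0 then 0
      else ereal (pmf (return_pmf y) y' * pmf (return_pmf x) x') * log_ratio (pmf (w x') y') (pmf (wt x') y'))
      = (if y' = y then (if x' = x then ?LR else 0) else 0)"
    by (auto simp: indicator_def)
  have inner: "\<And>y'. (\<Sum>x'\<in>UNIV. (if y' = y then (if x' = x then ?LR else 0) else 0)) = (if y' = y then ?LR else 0)"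
    by (case_tac "y' = y") (simp_all add: sum.delta)
  have "cond_div (\<lambda>_. return_pmf y) w wt (return_pmf x) = ?LR"
    unfolding cond_div_def pt inner by (simp add: sum.delta)
  then have "?LR \<le> ereal r" using le by simp
  then show ?thesis
  proof (cases "pmf (w x) y > 0")
    case a: True
    show ?thesis
    proof (cases "pmf (wt x) y > 0")
      case b: True
      with a \<open>?LR \<le> ereal r\<close> have "log 2 (pmf (w x) y / pmf (wt x) y) \<le> r" by (simp add: log_ratio_def)
      then have "2 powr log 2 (pmf (w x) y / pmf (wt x) y) \<le> 2 powr r" by simp
      then have "pmf (w x) y / pmf (wt x) y \<le> 2 powr r" using a b by simp
      then show ?thesis using b by (simp add: divide_le_eq)
    next
      case False
      with a \<open>?LR \<le> ereal r\<close> show ?thesis by (simp add: log_ratio_def)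
    qed
  next
    case False
    then have "pmf (w x) y = 0" by (simp add: pmf_positive_iff less_le)
    then show ?thesis by simp
  qed
qed

lemma logcmp1:
  assumes "0 < q" "0 < p" "0 < m" "q \<le> C * p" "0 < C"
  shows "- log 2 (q / m) \<ge> - log 2 (p / m) - log 2 C"
proof -
  have "log 2 (q / m) \<le> log 2 (C * p / m)"
    using assms by (subst log_le_cancel_iff) (auto simp: divide_right_mono)
  also have "\<dots> = log 2 C + log 2 (p / m)"
    using assms by (subst times_divide_eq_right[symmetric], subst log_mult) auto
  finally show ?thesis by simp
qed

lemma logcmp2:
  assumes "0 < q" "0 < p" "0 < m" "- log 2 (q / m) > - log 2 (p / m) + e"
  shows "q \<le> 2 powr (- e) * p"
proof -
  have "log 2 (q / m) < log 2 (p / m) - e" using assms by simp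
  also have "\<dots> = log 2 (2 powr (- e) * p / m)"
    using assms by (simp add: log_mult log_divide)
  finally have "q / m < 2 powr (- e) * p / m"
    using assms by (subst (asm) log_less_cancel_iff) auto
  then show ?thesis using assms by (simp add: divide_less_cancel)
qed

theorem lemma32:
  fixes n :: nat
    and PMX :: "('m \<times> 'x::finite list) pmf"
    and wt :: "'x \<Rightarrow> 'y::finite pmf"
    and \<delta> \<alpha> \<epsilon> :: real
  assumes "n \<ge> 27"
    and "CARD('x) \<ge> 2" and "CARD('y) \<ge> 2"
    and "\<forall>mx \<in> set_pmf PMX. length (snd mx) = n"
    and "\<delta> > 0" and "\<alpha> > 0"
    and "\<epsilon> > 2 * real CARD('x) * real CARD('y) / real n * log 2 (real n)"
    and "dev_prob (joint_MY PMX wt) (real n * \<delta>) < 2 powr (- real n * \<alpha>)"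
  shows "\<forall>w :: 'x \<Rightarrow> 'y pmf.
     (SUP ph \<in> (UNIV :: 'x pmf set). SUP wh \<in> (UNIV :: ('x \<Rightarrow> 'y pmf) set). cond_div wh w wt ph)
        \<le> ereal (\<epsilon> - 2 * real CARD('x) * real CARD('y) / real n * log 2 (real n))
     \<longrightarrow>
     (let s = 2 powr (- real n * \<epsilon>) + 2 powr (- real n * (\<alpha> - \<epsilon>));
          \<delta>' = (2 + s) * (\<delta> + \<epsilon>) + s * (log 2 (real CARD('y)) - 2 / real n * log 2 s)
      in dev_prob (joint_MY PMX w) (real n * \<delta>') < s)"
proof (intro allI impI)
  fix w :: "'x \<Rightarrow> 'y pmf"
  define c where "c = 2 * real CARD('x) * real CARD('y) / real n * log 2 (real n)"
  assume sup: "(SUP ph \<in> (UNIV :: 'x pmf set). SUP wh \<in> (UNIV :: ('x \<Rightarrow> 'y pmf) set). cond_div wh w wt ph)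
        \<le> ereal (\<epsilon> - 2 * real CARD('x) * real CARD('y) / real n * log 2 (real n))"
  define r where "r = \<epsilon> - c"
  define K where "K = 2 powr r"
  have Kpos: "K > 0" by (simp add: K_def)
  have wb: "\<And>x y. pmf (w x) y \<le> K * pmf (wt x) y"
    unfolding K_def r_def c_def by (rule wbound[OF sup])
  define Q where "Q = joint_MY PMX w"
  define P where "P = joint_MY PMX wt"
  have lenQ: "\<forall>z\<in>set_pmf Q. length (snd z) = n"
    using assms(4) unfolding Q_def by (auto dest!: joint_set)
  have lenP: "\<forall>z\<in>set_pmf P. length (snd z) = n"
    using assms(4) unfolding P_def by (auto dest!: joint_set)
  have npos: "real n > 0" using assms(1) by simp
  have logn: "log 2 (real n) \<ge> 1" using assms(1) by simp
  have cge: "real n * c \<ge> 8"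
  proof -
    have "real n * c = 2 * real CARD('x) * real CARD('y) * log 2 (real n)" unfolding c_def using npos by simp
    moreover have "2 * real CARD('x) * real CARD('y) \<ge> 8"
    proof -
      have "real CARD('x) * real CARD('y) \<ge> 2 * 2" using assms(2,3) by (intro mult_mono) auto
      then show ?thesis by simp
    qed
    then have "2 * real CARD('x) * real CARD('y) * log 2 (real n) \<ge> 8 * 1"
      using logn by (intro mult_mono) auto
    ultimately show ?thesis by simp
  qed
  have "0 < real n * c" using cge by linarith
  then have c0: "c \<ge> 0" using npos by (simp add: zero_less_mult_iff)
  have "\<epsilon> > c" using assms(7) unfolding c_def .
  then have "real n * \<epsilon> > real n * c" using npos by simp
  then have ne8: "real n * \<epsilon> > 8" using cge by linarith
  define Kn where "Kn = 2 powr (real n * r)"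
  have Kn: "K ^ n = Kn" unfolding K_def Kn_def by (simp add: powr_realpow[symmetric] powr_powr mult.commute)
  have Knpos: "Kn > 0" by (simp add: Kn_def)
  have QP: "\<And>z. pmf Q z \<le> Kn * pmf P z"
    unfolding Q_def P_def Kn[symmetric] by (rule joint_le[OF assms(4) wb]) (use Kpos in simp)
  have margQ: "map_pmf fst Q = map_pmf fst PMX" unfolding Q_def by (rule marg_joint)
  have margP: "map_pmf fst P = map_pmf fst PMX" unfolding P_def by (rule marg_joint)
  define \<mu> where "\<mu> = map_pmf fst PMX"
  define a where "a = 2 powr (- real n * \<epsilon>)"
  define b where "b = 2 powr (- real n * (\<alpha> - \<epsilon>))"
  define s where "s = a + b"
  have apos: "a > 0" and bpos: "b > 0" by (simp_all add: a_def b_def)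
  have spos: "s > 0" using apos bpos by (simp add: s_def)
  define hw where "hw = info_density Q"
  define ht where "ht = info_density P"
  define Hw where "Hw = cond_entropy Q"
  define Ht where "Ht = cond_entropy P"
  define d where "d = \<delta> + \<epsilon>"
  define L where "L = real n * log 2 (real CARD('y))"
  define N where "N = real (CARD('y) ^ n)"
  have Npos: "N > 0" unfolding N_def by simp
  have logN: "log 2 N = L" unfolding N_def L_def by (simp add: log_nat_power)
  have L0: "L \<ge> 0" unfolding L_def using assms(3) by simp
  have suppQ: "\<And>z. z \<in> set_pmf Q \<Longrightarrow> pmf Q z > 0 \<and> pmf P z > 0 \<and> pmf \<mu> (fst z) > 0"
  proof -
    fix z assume z: "z \<in> set_pmf Q"
    have q: "pmf Q z > 0" using z by (simp add: pmf_positive)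
    have "pmf P z \<noteq> 0"
    proof
      assume "pmf P z = 0" with QP[of z] q show False by simp
    qed
    then have "pmf P z > 0" using pmf_nonneg[of P z] by linarith
    moreover have "pmf \<mu> (fst z) > 0" using pmf_le_marg[of Q z] q margQ \<mu>_def by simp
    ultimately show "pmf Q z > 0 \<and> pmf P z > 0 \<and> pmf \<mu> (fst z) > 0" using q by simp
  qed
  have hwge: "\<And>z. z \<in> set_pmf Q \<Longrightarrow> hw z \<ge> ht z - real n * \<epsilon>"
  proof -
    fix z assume z: "z \<in> set_pmf Q"
    have "- log 2 (pmf Q z / pmf \<mu> (fst z)) \<ge> - log 2 (pmf P z / pmf \<mu> (fst z)) - log 2 Kn"
      using suppQ[OF z] QP[of z] Knpos by (intro logcmp1) auto
    moreover have "log 2 Kn = real n * r" by (simp add: Kn_def)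
    moreover have "real n * r \<le> real n * \<epsilon>" using c0 npos unfolding r_def by simp
    ultimately show "hw z \<ge> ht z - real n * \<epsilon>"
      unfolding hw_def ht_def info_density_def margQ margP \<mu>_def by linarith
  qed
  define E1 where "E1 = {z. \<bar>ht z - Ht\<bar> > real n * \<delta>}"
  define E2 where "E2 = {z. hw z > ht z + real n * \<epsilon>}"
  have mE1: "measure Q E1 < b"
  proof -
    have "measure Q E1 \<le> Kn * measure P E1" by (rule prob_le[OF QP]) (use Knpos in simp)
    also have "\<dots> < Kn * 2 powr (- real n * \<alpha>)"
      using assms(8) Knpos unfolding E1_def ht_def Ht_def dev_prob_def P_def by simp
    also have "\<dots> = 2 powr (real n * r - real n * \<alpha>)" by (simp add: Kn_def powr_add[symmetric])
    also have "\<dots> \<le> b" unfolding b_def r_def using c0 npos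
      by (intro powr_mono) (auto simp: algebra_simps)
    finally show ?thesis .
  qed
  have mE2: "measure Q E2 \<le> a"
  proof -
    have "measure Q E2 \<le> a * measure P E2"
    proof (rule prob_le)
      fix z assume z: "z \<in> E2"
      show "pmf Q z \<le> a * pmf P z"
      proof (cases "z \<in> set_pmf Q")
        case True
        have "pmf Q z \<le> 2 powr (- (real n * \<epsilon>)) * pmf P z"
          using suppQ[OF True] z unfolding E2_def hw_def ht_def info_density_def margQ margP \<mu>_def
          by (intro logcmp2[where m="pmf (map_pmf fst PMX) (fst z)"]) auto
        then show ?thesis by (simp add: a_def)
      next
        case False then show ?thesis using apos by (simp add: set_pmf_eq)
      qed
    qed (use apos in simp)
    also have "\<dots> \<le> a" using apos by (simp add: mult_left_le)
    finally show ?thesis .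
  qed
  define Bc where "Bc = E1 \<union> E2"
  define q where "q = measure Q Bc"
  have qs: "q < s"
  proof -
    have "q \<le> measure Q E1 + measure Q E2" unfolding q_def Bc_def by (rule measure_subadditive) auto
    then show ?thesis using mE1 mE2 unfolding s_def by linarith
  qed
  have q0: "q \<ge> 0" unfolding q_def by simp
  show "let s = 2 powr (- real n * \<epsilon>) + 2 powr (- real n * (\<alpha> - \<epsilon>));
          \<delta>' = (2 + s) * (\<delta> + \<epsilon>) + s * (log 2 (real CARD('y)) - 2 / real n * log 2 s)
      in dev_prob (joint_MY PMX w) (real n * \<delta>') < s"
    unfolding Let_def a_def[symmetric] b_def[symmetric] s_def[symmetric] Q_def[symmetric]
  proof (cases "s > 1")
    case True
    then show "dev_prob Q (real n * ((2 + s) * (\<delta> + \<epsilon>) + s * (log 2 (real CARD('y)) - 2 / real n * log 2 s))) < s"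
      unfolding dev_prob_def using measure_pmf.prob_le_1[of Q] by (smt (verit))
  next
    case False
    then have s1: "s \<le> 1" by simp
    have logs: "log 2 s \<le> 0" using s1 spos by simp
    have hiQ: "integrable Q hw" unfolding hw_def by (rule ls(1)[OF lenQ])
    have hnnQ: "AE z in Q. 0 \<le> hw z" unfolding hw_def by (rule ls(2)[OF lenQ])
    have Ht0: "0 \<le> Ht" unfolding Ht_def cond_entropy_def by (rule integral_nonneg_AE) (rule ls(2)[OF lenP])
    have HtL: "Ht \<le> L"
    proof -
      have "(\<integral>z. info_density P z * indicator UNIV z \<partial>P)
          \<le> (1 / N * real (CARD('y) ^ n) - measure P UNIV) / ln 2 - measure P UNIV * log 2 (1 / N)"
        by (rule ls(3)[OF lenP]) (use Npos in simp)
      moreover have "log 2 (1 / N) = - L" using Npos logN by (simp add: log_divide)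
      ultimately show ?thesis using Npos unfolding Ht_def cond_entropy_def N_def by simp
    qed
    define G where "G = UNIV - Bc"
    have mG: "measure Q G = 1 - q" unfolding G_def q_def
      using measure_pmf.prob_compl[of Bc Q] by simp
    have intI: "\<And>X. integrable Q (\<lambda>z. hw z * indicator X z)"
      by (rule integrable_real_mult_indicator) (use hiQ in auto)
    have intC: "\<And>C X. integrable Q (\<lambda>z. C * indicat_real X z)"
    proof -
      fix C :: real and X
      show "integrable Q (\<lambda>z. C * indicat_real X z)"
        by (rule integrable_pmf_bounded[where B="\<bar>C\<bar>"]) (simp add: indicator_def)
    qed
    define I1 where "I1 = (\<integral>z. hw z * indicator Bc z \<partial>Q)"
    define I2 where "I2 = (\<integral>z. hw z * indicator G z \<partial>Q)"
    have HwI: "Hw = I1 + I2"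
    proof -
      have "Hw = (\<integral>z. hw z * indicator Bc z + hw z * indicator G z \<partial>Q)"
        unfolding Hw_def cond_entropy_def hw_def[symmetric]
        by (rule Bochner_Integration.integral_cong) (auto simp: G_def indicator_def)
      also have "\<dots> = I1 + I2" unfolding I1_def I2_def
        by (rule Bochner_Integration.integral_add) (rule intI)+
      finally show ?thesis .
    qed
    have I1ge: "0 \<le> I1" unfolding I1_def
      by (rule integral_nonneg_AE) (use hnnQ in \<open>auto simp: indicator_def\<close>)
    have I1le: "I1 \<le> (s - q) / ln 2 - q * (log 2 s - L)"
    proof -
      have "I1 \<le> (s / N * real (CARD('y) ^ n) - q) / ln 2 - q * log 2 (s / N)"
        unfolding I1_def hw_def q_def by (rule ls(3)[OF lenQ]) (use Npos spos in simp)
      moreover have "log 2 (s / N) = log 2 s - L" using Npos spos logN by (simp add: log_divide)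
      ultimately show ?thesis using Npos unfolding N_def by simp
    qed
    have good: "\<And>z. z \<in> set_pmf Q \<Longrightarrow> z \<notin> Bc \<Longrightarrow> Ht - real n * d \<le> hw z \<and> hw z \<le> Ht + real n * d"
    proof -
      fix z assume z: "z \<in> set_pmf Q" "z \<notin> Bc"
      then have "\<bar>ht z - Ht\<bar> \<le> real n * \<delta>" "hw z \<le> ht z + real n * \<epsilon>"
        unfolding Bc_def E1_def E2_def by auto
      moreover have "hw z \<ge> ht z - real n * \<epsilon>" by (rule hwge[OF z(1)])
      ultimately show "Ht - real n * d \<le> hw z \<and> hw z \<le> Ht + real n * d"
        unfolding d_def by (simp add: algebra_simps abs_le_iff)
    qed
    have I2le: "I2 \<le> (Ht + real n * d) * (1 - q)"
    proof -
      have "I2 \<le> (\<integral>z. (Ht + real n * d) * indicator G z \<partial>Q)" unfolding I2_def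
      proof (rule integral_mono_AE)
        show "AE z in Q. hw z * indicator G z \<le> (Ht + real n * d) * indicator G z"
          unfolding AE_measure_pmf_iff using good by (auto simp: indicator_def G_def)
      qed (rule intI, rule intC)
      also have "\<dots> = (Ht + real n * d) * (1 - q)" using mG by simp
      finally show ?thesis .
    qed
    have I2ge: "(Ht - real n * d) * (1 - q) \<le> I2"
    proof -
      have "(\<integral>z. (Ht - real n * d) * indicator G z \<partial>Q) \<le> I2" unfolding I2_def
      proof (rule integral_mono_AE)
        show "AE z in Q. (Ht - real n * d) * indicator G z \<le> hw z * indicator G z"
          unfolding AE_measure_pmf_iff using good by (auto simp: indicator_def G_def)
      qed (rule intC, rule intI)
      moreover have "(\<integral>z. (Ht - real n * d) * indicator G z \<partial>Q) = (Ht - real n * d) * (1 - q)" by (simp add: mG)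
      ultimately show ?thesis by linarith
    qed
    define nd where "nd = real n * d"
    have "real n * \<delta> > 0" using npos assms(5) by simp
    then have nd8: "nd > 8" unfolding nd_def d_def using ne8
      by (simp add: distrib_left)
    have iln: "1 / ln 2 \<le> nd"
    proof -
      have "1 / ln 2 \<le> 1 / (2/3 :: real)" using ln2_ge_two_thirds by (intro divide_left_mono) auto
      then show ?thesis using nd8 by simp
    qed
    have p1: "q * Ht \<le> s * L" using q0 qs Ht0 HtL by (intro mult_mono) auto
    have p2: "0 \<le> q * Ht" using q0 Ht0 by simp
    have p3: "q * nd \<le> s * nd" using qs nd8 by (intro mult_right_mono) auto
    have p4: "0 \<le> q * nd" using q0 nd8 by simp
    have p5: "s * log 2 s \<le> q * log 2 s" using qs logs by (intro mult_right_mono_neg) auto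
    have p6: "q * L \<le> s * L" using qs L0 by (intro mult_right_mono) auto
    have p7: "s * log 2 s \<le> 0" using spos logs by (simp add: mult_nonneg_nonpos)
    have p8: "s / ln 2 \<le> s * nd" using iln spos mult_left_mono[OF iln, of s] by simp
    have p9: "0 \<le> q / ln 2" using q0 by simp
    have e1: "(Ht + nd) * (1 - q) = Ht + nd - q * Ht - q * nd" by (simp add: algebra_simps)
    have e2: "(Ht - nd) * (1 - q) = Ht - nd - q * Ht + q * nd" by (simp add: algebra_simps)
    have e3: "(s - q) / ln 2 - q * (log 2 s - L) = s / ln 2 - q / ln 2 - q * log 2 s + q * L"
      by (simp add: algebra_simps diff_divide_distrib)
    have e4: "real n * ((2 + s) * (\<delta> + \<epsilon>) + s * (log 2 (real CARD('y)) - 2 / real n * log 2 s))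
       = (2 + s) * nd + s * L - 2 * (s * log 2 s)"
      unfolding nd_def d_def L_def using npos by (simp add: algebra_simps)
    have bound: "\<And>z. z \<in> set_pmf Q \<Longrightarrow> z \<notin> Bc \<Longrightarrow> \<bar>hw z - Hw\<bar> \<le> (2 + s) * nd + s * L - 2 * (s * log 2 s)"
    proof -
      fix z assume z: "z \<in> set_pmf Q" "z \<notin> Bc"
      from good[OF z] have g: "Ht - nd \<le> hw z" "hw z \<le> Ht + nd" unfolding nd_def by auto
      have sa: "s * nd \<ge> 0" using spos nd8 by simp
      have I2le': "I2 \<le> (Ht + nd) * (1 - q)" using I2le unfolding nd_def .
      have I2ge': "(Ht - nd) * (1 - q) \<le> I2" using I2ge unfolding nd_def .
      have ex: "(2 + s) * nd = 2 * nd + s * nd" by (simp add: algebra_simps)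
      have u: "hw z - Hw \<le> (2 + s) * nd + s * L - 2 * (s * log 2 s)"
        using g HwI I1ge I2ge' p1 p2 p3 p4 p5 p6 p7 p8 p9 e2 sa ex by linarith
      have v: "Hw - hw z \<le> (2 + s) * nd + s * L - 2 * (s * log 2 s)"
        using g HwI I1le I2le' p1 p2 p3 p4 p5 p6 p7 p8 p9 e1 e3 sa ex by (smt (verit))
      show "\<bar>hw z - Hw\<bar> \<le> (2 + s) * nd + s * L - 2 * (s * log 2 s)"
        using u v by (simp add: abs_le_iff)
    qed
    have "dev_prob Q (real n * ((2 + s) * (\<delta> + \<epsilon>) + s * (log 2 (real CARD('y)) - 2 / real n * log 2 s)))
        = measure Q ({z. \<bar>hw z - Hw\<bar> > (2 + s) * nd + s * L - 2 * (s * log 2 s)} \<inter> set_pmf Q)"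
      unfolding dev_prob_def e4 hw_def Hw_def by (simp add: measure_Int_set_pmf)
    also have "\<dots> \<le> q" unfolding q_def
      by (rule measure_pmf.finite_measure_mono) (use bound in \<open>force+\<close>)
    finally show "dev_prob Q (real n * ((2 + s) * (\<delta> + \<epsilon>) + s * (log 2 (real CARD('y)) - 2 / real n * log 2 s))) < s"
      using qs by linarith
  qed
qed


end
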